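(* Let $F$ be a field of characteristic $0$ and $G$ a group. The following are equivalent: (1) the group ring $F[G]$ is right $\aleph_0$-self-injective; (2) $G$ is finite; (3) $F[G]$ is right self-injective.
   Context: A ring $S$ is right $\aleph_0$-self-injective if every $S$-homomorphism from a countably generated right ideal of $S$ into $S_S$ extends to an $S$-homomorphism $S\to S$. *)

theory Defs
  imports "HOL-Library.Poly_Mapping" "HOL-Library.Countable_Set"
begin

text \<open>Group ring F[G]: finitely supported functions G \<Rightarrow> F with convolution
  product, i.e. the library type of finitely supported maps (poly_mapping) where 'g is a (not necessarily
  commutative) group written additively (class group_add).\<close>

definition right_ideal :: "'r::ring_1 set \<Rightarrow> bool" where
  "right_ideal I \<longleftrightarrow> 0 \<in> I \<and> (\<forall>x\<in>I. \<forall>y\<in>I. x + y \<in> I) \<and> (\<forall>x\<in>I. \<forall>s. x * s \<in> I)"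

definition right_hom :: "'r::ring_1 set \<Rightarrow> ('r \<Rightarrow> 'r) \<Rightarrow> bool" where
  "right_hom I \<phi> \<longleftrightarrow> (\<forall>x\<in>I. \<forall>y\<in>I. \<phi> (x + y) = \<phi> x + \<phi> y) \<and> (\<forall>x\<in>I. \<forall>s. \<phi> (x * s) = \<phi> x * s)"

definition countably_generated_right_ideal :: "'r::ring_1 set \<Rightarrow> bool" where
  "countably_generated_right_ideal I \<longleftrightarrow>
     right_ideal I \<and> (\<exists>X. countable X \<and> I = \<Inter>{J. right_ideal J \<and> X \<subseteq> J})"

definition right_self_injective :: "'r::ring_1 itself \<Rightarrow> bool" where
  "right_self_injective _ \<longleftrightarrow>
     (\<forall>(I::'r set) \<phi>. right_ideal I \<and> right_hom I \<phi> \<longrightarrow>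
        (\<exists>\<psi>. right_hom UNIV \<psi> \<and> (\<forall>x\<in>I. \<psi> x = \<phi> x)))"

definition right_aleph0_self_injective :: "'r::ring_1 itself \<Rightarrow> bool" where
  "right_aleph0_self_injective _ \<longleftrightarrow>
     (\<forall>(I::'r set) \<phi>. countably_generated_right_ideal I \<and> right_hom I \<phi> \<longrightarrow>
        (\<exists>\<psi>. right_hom UNIV \<psi> \<and> (\<forall>x\<in>I. \<psi> x = \<phi> x)))"

end

theory Submission
  imports Defs "HOL.Vector_Spaces"
begin

abbreviation dl :: "'g::group_add \<Rightarrow> 'g \<Rightarrow>\<^sub>0 'a::field" where "dl g \<equiv> Poly_Mapping.single g 1"

lemma lookup_single_mult:
  fixes x :: "'g::group_add \<Rightarrow>\<^sub>0 'a::field"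
  shows "Poly_Mapping.lookup (Poly_Mapping.single h a * x) k = a * Poly_Mapping.lookup x (-h + k)"
proof -
  have "Poly_Mapping.lookup (Poly_Mapping.single h a * x) k = (\<Sum>l. (a when h = l) * (\<Sum>q. Poly_Mapping.lookup x q when k = l + q))"
    unfolding lookup_mult lookup_single by simp
  also have "\<dots> = (\<Sum>l. (a * (\<Sum>q. Poly_Mapping.lookup x q when k = l + q)) when h = l)"
    by (simp add: when_mult)
  also have "\<dots> = a * (\<Sum>q. Poly_Mapping.lookup x q when k = h + q)" by simp
  also have "(\<Sum>q. Poly_Mapping.lookup x q when k = h + q) = (\<Sum>q. Poly_Mapping.lookup x q when q = -h + k)"
    by (rule Sum_any.cong) (auto simp: when_def add.assoc[symmetric])
  also have "\<dots> = Poly_Mapping.lookup x (-h + k)" by simp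
  finally show ?thesis .
qed

lemma lookup_mult_single:
  fixes x :: "'g::group_add \<Rightarrow>\<^sub>0 'a::field"
  shows "Poly_Mapping.lookup (x * Poly_Mapping.single h a) k = Poly_Mapping.lookup x (k - h) * a"
proof -
  have "Poly_Mapping.lookup (x * Poly_Mapping.single h a) k = (\<Sum>l. Poly_Mapping.lookup x l * (\<Sum>q. (a when h = q) when k = l + q))"
    unfolding lookup_mult lookup_single by simp
  also have "\<dots> = (\<Sum>l. Poly_Mapping.lookup x l * (a when k = l + h))"
  proof -
    have "(\<Sum>q. (a when h = q) when k = l + q) = (a when k = l + h)" for l
    proof -
      have "(\<Sum>q. (a when h = q) when k = l + q) = (\<Sum>q. (a when k = l + h) when h = q)"
        by (rule Sum_any.cong) (auto simp: when_def)
      then show ?thesis by simp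
    qed
    then show ?thesis by simp
  qed
  also have "\<dots> = (\<Sum>l. Poly_Mapping.lookup x l * a when l = k - h)"
    by (rule Sum_any.cong) (auto simp: when_def mult_when)
  also have "\<dots> = Poly_Mapping.lookup x (k - h) * a" by simp
  finally show ?thesis .
qed

lemma scalar_central:
  fixes x :: "'g::group_add \<Rightarrow>\<^sub>0 'a::field"
  shows "Poly_Mapping.single 0 a * x = x * Poly_Mapping.single 0 a"
  by (rule poly_mapping_eqI) (simp add: lookup_single_mult lookup_mult_single mult.commute)

lemma pm_decomp:
  fixes x :: "'g::group_add \<Rightarrow>\<^sub>0 'a::field"
  shows "x = (\<Sum>g\<in>Poly_Mapping.keys x. Poly_Mapping.single g (Poly_Mapping.lookup x g))"
proof (rule poly_mapping_eqI)
  fix k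
  show "Poly_Mapping.lookup x k = Poly_Mapping.lookup (\<Sum>g\<in>Poly_Mapping.keys x. Poly_Mapping.single g (Poly_Mapping.lookup x g)) k"
    unfolding lookup_sum lookup_single when_def
    by (cases "k \<in> Poly_Mapping.keys x") (auto simp: in_keys_iff)
qed

lemma dl_mult: "dl g * dl h = (dl (g + h) :: 'g::group_add \<Rightarrow>\<^sub>0 'a::field)"
  by (simp add: mult_single)

lemma single_split: "Poly_Mapping.single h c = Poly_Mapping.single 0 c * (dl h :: 'g::group_add \<Rightarrow>\<^sub>0 'a::field)"
  by (simp add: mult_single)

lemma single_split2: "Poly_Mapping.single h c = (dl h :: 'g::group_add \<Rightarrow>\<^sub>0 'a::field) * Poly_Mapping.single 0 c"
  by (simp add: mult_single)

lemma right_ideal_sum: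
  assumes "right_ideal I" "finite A" "\<And>i. i \<in> A \<Longrightarrow> f i \<in> I"
  shows "sum f A \<in> I"
  using assms(2,3)
proof (induction A rule: finite_induct)
  case empty then show ?case using assms(1) by (simp add: right_ideal_def)
next
  case (insert x F) then show ?case using assms(1) by (simp add: right_ideal_def)
qed

lemma right_ideal_Inter: "right_ideal (\<Inter>{J. right_ideal J \<and> X \<subseteq> J})"
  unfolding right_ideal_def by blast

lemma principal_cg:
  fixes x :: "'r::ring_1"
  shows "countably_generated_right_ideal (range ((*) x))"
proof -
  have ri: "right_ideal (range ((*) x))"
    unfolding right_ideal_def
    by (auto simp: distrib_left[symmetric] mult.assoc) (metis mult_zero_right rangeI)
  have "range ((*) x) = \<Inter>{J. right_ideal J \<and> {x} \<subseteq> J}"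
  proof
    show "range ((*) x) \<subseteq> \<Inter>{J. right_ideal J \<and> {x} \<subseteq> J}"
      by (auto simp: right_ideal_def)
    show "\<Inter>{J. right_ideal J \<and> {x} \<subseteq> J} \<subseteq> range ((*) x)"
    proof
      fix z assume z: "z \<in> \<Inter>{J. right_ideal J \<and> {x} \<subseteq> J}"
      have "x \<in> range ((*) x)" by (metis rangeI mult_1_right)
      then show "z \<in> range ((*) x)" using z ri by blast
    qed
  qed
  then show ?thesis using ri unfolding countably_generated_right_ideal_def
    by (intro conjI exI[of _ "{x}"]) auto
qed

lemma right_hom_UNIV: "right_hom UNIV \<psi> \<Longrightarrow> \<psi> x = \<psi> 1 * x"
  unfolding right_hom_def by (metis UNIV_I mult_1_left)

lemma additive_sum:
  fixes f :: "'c::comm_monoid_add \<Rightarrow> 'b::ab_group_add"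
  assumes "\<And>x y. f (x + y) = f x + f y"
  shows "f (sum g A) = (\<Sum>i\<in>A. f (g i))"
proof -
  have f0: "f 0 = 0" using assms[of 0 0] by (metis add_cancel_right_right add_0)
  show ?thesis
  proof (cases "finite A")
    case True then show ?thesis by (induction A rule: finite_induct) (auto simp: f0 assms)
  next
    case False then show ?thesis by (simp add: f0)
  qed
qed

lemma hom_from_basic:
  fixes f :: "('g::group_add \<Rightarrow>\<^sub>0 'a::field) \<Rightarrow> ('g \<Rightarrow>\<^sub>0 'a)"
  assumes add: "\<And>x y. f (x + y) = f x + f y"
    and sc: "\<And>x a. f (x * Poly_Mapping.single 0 a) = f x * Poly_Mapping.single 0 a"
    and sh: "\<And>x h. f (x * dl h) = f x * dl h"
  shows "f (x * r) = f x * r"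
proof -
  have "x * r = (\<Sum>h\<in>Poly_Mapping.keys r. x * Poly_Mapping.single 0 (Poly_Mapping.lookup r h) * dl h)"
    by (subst pm_decomp[of r]) (simp add: sum_distrib_left mult.assoc single_split[symmetric])
  then have "f (x * r) = (\<Sum>h\<in>Poly_Mapping.keys r. f x * Poly_Mapping.single 0 (Poly_Mapping.lookup r h) * dl h)"
    by (simp add: additive_sum[OF add] sh sc)
  also have "\<dots> = f x * r"
    by (subst (2) pm_decomp[of r]) (simp add: sum_distrib_left mult.assoc single_split[symmetric])
  finally show ?thesis .
qed

definition scl :: "'a::field \<Rightarrow> ('g::group_add \<Rightarrow>\<^sub>0 'a) \<Rightarrow> ('g \<Rightarrow>\<^sub>0 'a)" where
  "scl a x = Poly_Mapping.single 0 a * x"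

lemma vs_scl: "vector_space (scl :: 'a::field \<Rightarrow> ('g::group_add \<Rightarrow>\<^sub>0 'a) \<Rightarrow> _)"
  by unfold_locales (simp_all add: scl_def distrib_left distrib_right single_add mult.assoc[symmetric] mult_single)

lemma finite_self_injective:
  assumes fin: "finite (UNIV :: 'g::group_add set)"
  shows "right_self_injective TYPE('g \<Rightarrow>\<^sub>0 'a::field_char_0)"
  unfolding right_self_injective_def
proof (intro allI impI)
  fix I :: "('g \<Rightarrow>\<^sub>0 'a) set" and \<phi>
  assume "right_ideal I \<and> right_hom I \<phi>"
  then have RI: "right_ideal I" and RH: "right_hom I \<phi>" by auto
  interpret vs: vector_space "scl :: 'a \<Rightarrow> ('g \<Rightarrow>\<^sub>0 'a) \<Rightarrow> _" by (rule vs_scl)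
  interpret vp: vector_space_pair "scl :: 'a \<Rightarrow> ('g \<Rightarrow>\<^sub>0 'a) \<Rightarrow> _" "scl :: 'a \<Rightarrow> ('g \<Rightarrow>\<^sub>0 'a) \<Rightarrow> _"
    by (simp add: vector_space_pair_def vs_scl)
  have scI: "Poly_Mapping.single 0 a * x \<in> I" if "x \<in> I" for a x
    using that RI scalar_central[of a x] by (simp add: right_ideal_def)
  have sub: "vs.subspace I"
    using RI scI unfolding vs.subspace_def right_ideal_def scl_def by simp
  have lin_id: "Vector_Spaces.linear scl scl (id :: ('g \<Rightarrow>\<^sub>0 'a) \<Rightarrow> _)"
    by (rule vs.linear_id)
  obtain P where P1: "P ` UNIV \<subseteq> I" and P2: "Vector_Spaces.linear scl scl P" and P3: "\<And>v. v \<in> I \<Longrightarrow> P v = v"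
    using vp.linear_exists_left_inverse_on[OF lin_id sub] by auto
  have Padd: "P (x + y) = P x + P y" for x y using P2 by (simp add: linear_iff)
  have Psc: "P (Poly_Mapping.single 0 a * x) = Poly_Mapping.single 0 a * P x" for a x
    using P2 by (simp add: linear_iff scl_def)
  define n where "n = card (UNIV :: 'g set)"
  have npos: "n > 0" using fin by (simp add: n_def card_gt_0_iff)
  define c :: 'a where "c = inverse (of_nat n)"
  define Q where "Q x = (\<Sum>g\<in>UNIV. P (x * dl (-g)) * dl g) * Poly_Mapping.single 0 c" for x
  have Qadd: "Q (x + y) = Q x + Q y" for x y
    by (simp add: Q_def distrib_right Padd sum.distrib)
  have Qsc: "Q (x * Poly_Mapping.single 0 a) = Q x * Poly_Mapping.single 0 a" for x a
  proof -
    have "P (x * Poly_Mapping.single 0 a * dl (-g)) * dl g = P (x * dl (-g)) * dl g * Poly_Mapping.single 0 a" for g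
    proof -
      have "x * Poly_Mapping.single 0 a * dl (-g) = Poly_Mapping.single 0 a * (x * dl (-g))"
        by (simp only: scalar_central[of a x, symmetric] mult.assoc)
      moreover have "Poly_Mapping.single 0 a * P (x * dl (-g)) * dl g = P (x * dl (- g)) * dl g * Poly_Mapping.single 0 a"
        using scalar_central[of a "P (x * dl (-g)) * dl g"] by (simp add: mult.assoc)
      ultimately show ?thesis by (simp only: Psc)
    qed
    then have "(\<Sum>g\<in>UNIV. P (x * Poly_Mapping.single 0 a * dl (-g)) * dl g) = (\<Sum>g\<in>UNIV. P (x * dl (-g)) * dl g) * Poly_Mapping.single 0 a"
      by (simp add: sum_distrib_right)
    then show ?thesis unfolding Q_def
      by (simp add: mult.assoc mult_single mult.commute)
  qed
  have Qsh: "Q (x * dl h) = Q x * dl h" for x h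
  proof -
    have "(\<Sum>g\<in>UNIV. P (x * dl h * dl (-g)) * dl g) = (\<Sum>g\<in>UNIV. P (x * dl (-g)) * dl g * dl h)"
    proof (rule sum.reindex_bij_witness[of _ "\<lambda>g. g + h" "\<lambda>g. g - h"])
      fix g
      have 1: "- (g - h) = h + - g" by (simp only: diff_conv_add_uminus minus_add minus_minus)
      have 2: "g - h + h = g" by simp
      show "P (x * dl (- (g - h))) * dl (g - h) * dl h = P (x * dl h * dl (- g)) * dl g"
        by (simp only: 1 mult.assoc dl_mult 2)
    qed auto
    then show ?thesis unfolding Q_def
      by (simp add: sum_distrib_right mult.assoc mult_single)
  qed
  have Qhom: "Q (x * r) = Q x * r" for x r
    by (rule hom_from_basic[OF Qadd Qsc Qsh])
  have QI: "Q x \<in> I" for x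
  proof -
    have "(\<Sum>g\<in>UNIV. P (x * dl (-g)) * dl g) \<in> I"
      by (rule right_ideal_sum[OF RI fin]) (use P1 RI in \<open>auto simp: right_ideal_def image_subset_iff\<close>)
    then show ?thesis using RI by (simp add: Q_def right_ideal_def)
  qed
  have Qid: "Q y = y" if "y \<in> I" for y
  proof -
    have "y * dl (-g) \<in> I" for g using that RI by (simp add: right_ideal_def)
    then have "(\<Sum>g\<in>UNIV. P (y * dl (-g)) * dl g) = (\<Sum>g\<in>(UNIV::'g set). y)"
      by (simp add: P3 mult.assoc dl_mult)
    also have "\<dots> = of_nat n * y" by (simp add: n_def)
    finally have "Q y = of_nat n * y * Poly_Mapping.single 0 c"
      by (simp add: Q_def)
    also have "\<dots> = y * (Poly_Mapping.single 0 (of_nat n) * Poly_Mapping.single 0 c)"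
      by (simp only: mult_of_nat_commute mult.assoc single_of_nat)
    also have "\<dots> = y" using npos
      by (simp only: mult_single c_def) simp
    finally show ?thesis .
  qed
  define e where "e = Q 1"
  have eI: "e \<in> I" by (simp add: e_def QI)
  have ey: "e * y = y" if "y \<in> I" for y
    using Qhom[of 1 y] Qid[OF that] by (simp add: e_def)
  show "\<exists>\<psi>. right_hom UNIV \<psi> \<and> (\<forall>x\<in>I. \<psi> x = \<phi> x)"
  proof (intro exI conjI ballI)
    show "right_hom UNIV ((*) (\<phi> e))" by (simp add: right_hom_def distrib_left mult.assoc)
    fix x assume "x \<in> I"
    then show "\<phi> e * x = \<phi> x" using RH eI ey unfolding right_hom_def by metis
  qed
qed

definition Tinv :: "'g::group_add set \<Rightarrow> ('g \<Rightarrow>\<^sub>0 'a::field) set" where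
  "Tinv S = {y. \<forall>s\<in>S. dl s * y = y}"

definition Kst :: "'g::group_add set \<Rightarrow> 'a::field itself \<Rightarrow> 'g set" where
  "Kst S (_::'a itself) = {g. \<forall>y\<in>(Tinv S :: ('g \<Rightarrow>\<^sub>0 'a) set). dl g * y = y}"

definition subgrp :: "'g::group_add set \<Rightarrow> bool" where
  "subgrp K \<longleftrightarrow> 0 \<in> K \<and> (\<forall>x\<in>K. \<forall>y\<in>K. x + y \<in> K) \<and> (\<forall>x\<in>K. -x \<in> K)"

definition avg :: "'g::group_add set \<Rightarrow> ('g \<Rightarrow>\<^sub>0 'a::field)" where
  "avg K = (\<Sum>g\<in>K. Poly_Mapping.single g (inverse (of_nat (card K))))"

lemma dl_zero: "dl 0 = (1 :: 'g::group_add \<Rightarrow>\<^sub>0 'a::field)" by simp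

lemma Kst_subgrp: "subgrp (Kst S TYPE('a::field))"
  unfolding subgrp_def Kst_def
proof (intro conjI ballI; clarsimp)
  fix x y and z :: "'b \<Rightarrow>\<^sub>0 'a"
  assume "\<forall>y\<in>Tinv S. dl x * y = (y::'b \<Rightarrow>\<^sub>0 'a)" "\<forall>z\<in>Tinv S. dl y * z = (z::'b \<Rightarrow>\<^sub>0 'a)" "z \<in> Tinv S"
  then show "dl (x + y) * z = z" by (simp add: dl_mult[symmetric] mult.assoc)
next
  fix x and z :: "'b \<Rightarrow>\<^sub>0 'a"
  assume a: "\<forall>y\<in>Tinv S. dl x * y = (y::'b \<Rightarrow>\<^sub>0 'a)" "z \<in> Tinv S"
  have "dl (-x) * z = dl (-x) * (dl x * z)" using a by simp
  also have "\<dots> = z" by (simp add: mult.assoc[symmetric] dl_mult)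
  finally show "dl (-x) * z = z" .
qed

lemma S_sub_Kst: "S \<subseteq> Kst S TYPE('a::field)"
  unfolding Kst_def Tinv_def by auto

lemma Kst_mono: "S \<subseteq> S' \<Longrightarrow> Kst S TYPE('a::field) \<subseteq> Kst S' TYPE('a)"
  unfolding Kst_def Tinv_def by auto

lemma Kst_finite:
  assumes "y0 \<in> Tinv S" "y0 \<noteq> (0 :: 'g::group_add \<Rightarrow>\<^sub>0 'a::field)"
  shows "finite (Kst S TYPE('a))"
proof -
  obtain k0 where k0: "k0 \<in> Poly_Mapping.keys y0" using assms(2)
    by (metis all_not_in_conv keys_eq_empty)
  have "Kst S TYPE('a) \<subseteq> (\<lambda>k. k - k0) ` Poly_Mapping.keys y0"
  proof
    fix g assume "g \<in> Kst S TYPE('a)"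
    then have eq: "dl g * y0 = y0" using assms(1) by (simp add: Kst_def)
    have "Poly_Mapping.lookup y0 (g + k0) = Poly_Mapping.lookup (dl g * y0) (g + k0)" by (simp add: eq)
    also have "\<dots> = Poly_Mapping.lookup y0 k0" by (simp add: lookup_single_mult add.assoc[symmetric])
    finally have "g + k0 \<in> Poly_Mapping.keys y0" using k0 by (simp add: in_keys_iff)
    then show "g \<in> (\<lambda>k. k - k0) ` Poly_Mapping.keys y0"
      by (rule rev_image_eqI) simp
  qed
  then show ?thesis by (rule finite_subset) simp
qed

lemma lookup_avg:
  assumes "finite K"
  shows "Poly_Mapping.lookup (avg K :: 'g::group_add \<Rightarrow>\<^sub>0 'a::field) k = (if k \<in> K then inverse (of_nat (card K)) else 0)"
  unfolding avg_def lookup_sum lookup_single when_def using assms by (simp add: sum.delta)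

lemma avg_dl_left:
  assumes "subgrp K" "finite K" "g \<in> K"
  shows "dl g * avg K = (avg K :: 'g::group_add \<Rightarrow>\<^sub>0 'a::field)"
  by (rule poly_mapping_eqI) (use assms in \<open>auto simp: lookup_single_mult lookup_avg subgrp_def\<close>,
      metis add.assoc add.right_inverse add_0 add.left_inverse)

lemma avg_dl_right:
  assumes "subgrp K" "finite K" "g \<in> K"
  shows "avg K * dl g = (avg K :: 'g::group_add \<Rightarrow>\<^sub>0 'a::field)"
proof (rule poly_mapping_eqI)
  fix k
  have "k - g \<in> K \<longleftrightarrow> k \<in> K"
  proof
    assume "k - g \<in> K"
    then have "k - g + g \<in> K" using assms(1,3) unfolding subgrp_def by blast
    then show "k \<in> K" by simp
  next
    assume "k \<in> K"
    then have "k + - g \<in> K" using assms(1,3) unfolding subgrp_def by blast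
    then show "k - g \<in> K" by (simp only: diff_conv_add_uminus)
  qed
  then show "Poly_Mapping.lookup (avg K * dl g) k = Poly_Mapping.lookup (avg K :: 'g \<Rightarrow>\<^sub>0 'a) k"
    using assms by (simp add: lookup_mult_single lookup_avg)
qed

lemma avg_absorb_left:
  assumes "finite K" "K \<noteq> {}" "\<And>g. g \<in> K \<Longrightarrow> dl g * y = y"
  shows "avg K * y = (y :: 'g::group_add \<Rightarrow>\<^sub>0 'a::field_char_0)"
proof -
  define c :: 'a where "c = inverse (of_nat (card K))"
  have "avg K * y = (\<Sum>g\<in>K. Poly_Mapping.single g c * y)"
    by (simp add: avg_def c_def sum_distrib_right)
  also have "\<dots> = (\<Sum>g\<in>K. Poly_Mapping.single 0 c * (dl g * y))"
    by (rule sum.cong) (simp_all add: mult.assoc[symmetric] mult_single)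
  also have "\<dots> = (\<Sum>g\<in>K. Poly_Mapping.single 0 c * y)" using assms(3) by simp
  also have "\<dots> = of_nat (card K) * (Poly_Mapping.single 0 c * y)" by simp
  also have "\<dots> = (Poly_Mapping.single 0 (of_nat (card K)) * Poly_Mapping.single 0 c) * y"
    by (simp only: single_of_nat mult.assoc)
  also have "\<dots> = y" using assms(1,2) by (simp only: mult_single c_def) simp
  finally show ?thesis .
qed

lemma avg_absorb_right:
  assumes "finite K" "K \<noteq> {}" "\<And>g. g \<in> K \<Longrightarrow> y * dl g = y"
  shows "y * avg K = (y :: 'g::group_add \<Rightarrow>\<^sub>0 'a::field_char_0)"
proof -
  define c :: 'a where "c = inverse (of_nat (card K))"
  have "y * avg K = (\<Sum>g\<in>K. y * Poly_Mapping.single g c)"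
    by (simp add: avg_def c_def sum_distrib_left)
  also have "\<dots> = (\<Sum>g\<in>K. (y * dl g) * Poly_Mapping.single 0 c)"
    by (rule sum.cong) (simp_all add: mult.assoc mult_single)
  also have "\<dots> = (\<Sum>g\<in>K. y * Poly_Mapping.single 0 c)" using assms(3) by simp
  also have "\<dots> = of_nat (card K) * (y * Poly_Mapping.single 0 c)" by simp
  also have "\<dots> = y * (Poly_Mapping.single 0 (of_nat (card K)) * Poly_Mapping.single 0 c)"
    by (simp only: single_of_nat mult.assoc mult_of_nat_commute)
  also have "\<dots> = y" using assms(1,2) by (simp only: mult_single c_def) simp
  finally show ?thesis .
qed

lemma Tinv_principal:
  "\<exists>e. Tinv S = range ((*) (e :: 'g::group_add \<Rightarrow>\<^sub>0 'a::field_char_0))"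
proof (cases "Tinv S = ({0} :: ('g \<Rightarrow>\<^sub>0 'a) set)")
  case True
  then show ?thesis by (intro exI[of _ 0]) auto
next
  case False
  then obtain y0 where y0: "y0 \<in> Tinv S" "y0 \<noteq> (0 :: 'g \<Rightarrow>\<^sub>0 'a)"
    by (auto simp: Tinv_def)
  define K where "K = Kst S TYPE('a)"
  have fin: "finite K" unfolding K_def by (rule Kst_finite[OF y0])
  have sg: "subgrp K" unfolding K_def by (rule Kst_subgrp)
  then have ne: "K \<noteq> {}" by (auto simp: subgrp_def)
  show ?thesis
  proof (intro exI[of _ "avg K"] set_eqI iffI)
    fix y :: "'g \<Rightarrow>\<^sub>0 'a" assume "y \<in> Tinv S"
    then have "avg K * y = y" by (intro avg_absorb_left[OF fin ne]) (simp add: K_def Kst_def)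
    then show "y \<in> range ((*) (avg K))" by (metis rangeI)
  next
    fix y :: "'g \<Rightarrow>\<^sub>0 'a" assume "y \<in> range ((*) (avg K))"
    then obtain r where r: "y = avg K * r" by auto
    have "dl s * y = y" if "s \<in> S" for s
    proof -
      have "s \<in> K" using that S_sub_Kst unfolding K_def by blast
      then show ?thesis using r avg_dl_left[OF sg fin \<open>s \<in> K\<close>] by (metis mult.assoc)
    qed
    then show "y \<in> Tinv S" by (simp add: Tinv_def)
  qed
qed

definition aug :: "('g::group_add \<Rightarrow>\<^sub>0 'a::field) \<Rightarrow> 'a" where
  "aug x = (\<Sum>g\<in>Poly_Mapping.keys x. Poly_Mapping.lookup x g)"

lemma aug_superset:
  assumes "finite F" "Poly_Mapping.keys x \<subseteq> F"
  shows "aug x = (\<Sum>g\<in>F. Poly_Mapping.lookup x g)"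
  unfolding aug_def by (rule sum.mono_neutral_left) (use assms in \<open>auto simp: in_keys_iff\<close>)

lemma aug_add: "aug (x + y) = aug x + aug y"
proof -
  let ?F = "Poly_Mapping.keys x \<union> Poly_Mapping.keys y"
  have "aug (x + y) = (\<Sum>g\<in>?F. Poly_Mapping.lookup (x + y) g)"
    by (rule aug_superset) (auto simp: keys_add)
  also have "\<dots> = (\<Sum>g\<in>?F. Poly_Mapping.lookup x g) + (\<Sum>g\<in>?F. Poly_Mapping.lookup y g)"
    by (simp add: lookup_add sum.distrib)
  also have "\<dots> = aug x + aug y"
    by (simp add: aug_superset[symmetric])
  finally show ?thesis .
qed

lemma aug_diff: "aug (x - y) = aug x - aug y"
  by (metis aug_add add_diff_cancel eq_diff_eq)

lemma aug_mult_dl: "aug (x * dl s) = aug (x :: 'g::group_add \<Rightarrow>\<^sub>0 'a::field)"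
proof -
  let ?F = "(\<lambda>k. k + s) ` Poly_Mapping.keys x"
  have "Poly_Mapping.keys (x * dl s) \<subseteq> ?F"
  proof
    fix k assume "k \<in> Poly_Mapping.keys (x * dl s)"
    then have "k - s \<in> Poly_Mapping.keys x" by (simp add: in_keys_iff lookup_mult_single)
    then show "k \<in> ?F" by (rule rev_image_eqI) simp
  qed
  then have "aug (x * dl s) = (\<Sum>k\<in>?F. Poly_Mapping.lookup (x * dl s) k)"
    by (intro aug_superset) auto
  also have "\<dots> = (\<Sum>k\<in>Poly_Mapping.keys x. Poly_Mapping.lookup (x * dl s) (k + s))"
    by (subst sum.reindex) (auto simp: inj_on_def)
  also have "\<dots> = aug x" by (simp add: lookup_mult_single aug_def)
  finally show ?thesis .
qed

lemma aug_one: "aug (1 :: 'g::group_add \<Rightarrow>\<^sub>0 'a::field) = 1"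
  by (simp add: aug_def)

lemma aug_aug_zero: "aug (c * (1 - dl s)) = (0 :: 'a::field)"
  by (simp add: right_diff_distrib aug_diff aug_mult_dl)

lemma principal_inj:
  fixes a b e :: "'r::ring_1"
  assumes H: "right_aleph0_self_injective TYPE('r)"
    and ann: "\<And>y. y \<in> range ((*) e) \<Longrightarrow> a * y = 0 \<Longrightarrow> b * y = 0"
  shows "\<exists>c. \<forall>y\<in>range ((*) e). c * a * y = b * y"
proof -
  define J where "J = range ((*) (a * e))"
  define \<phi> where "\<phi> z = b * e * (SOME r. z = a * e * r)" for z
  have wd: "\<phi> (a * e * r) = b * e * r" for r
  proof -
    define r' where "r' = (SOME r'. a * e * r = a * e * r')"
    have "a * e * r = a * e * r'" unfolding r'_def by (rule someI) (rule refl)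
    then have "a * (e * (r' - r)) = 0" by (simp add: right_diff_distrib mult.assoc[symmetric])
    then have "b * (e * (r' - r)) = 0" using ann[of "e * (r' - r)"] by auto
    then have "b * e * r' = b * e * r" by (simp add: right_diff_distrib mult.assoc)
    then show ?thesis by (simp add: \<phi>_def r'_def)
  qed
  have rh: "right_hom J \<phi>"
    unfolding right_hom_def J_def
  proof (intro conjI ballI allI)
    fix x y assume "x \<in> range ((*) (a * e))" "y \<in> range ((*) (a * e))"
    then obtain r r' where "x = a * e * r" "y = a * e * r'" by auto
    then show "\<phi> (x + y) = \<phi> x + \<phi> y"
      using wd[of "r + r'"] by (simp add: wd distrib_left[symmetric])
  next
    fix x s assume "x \<in> range ((*) (a * e))"
    then obtain r where x: "x = a * e * r" by auto
    have "\<phi> (x * s) = \<phi> (a * e * (r * s))" by (simp only: x mult.assoc)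
    also have "\<dots> = b * e * (r * s)" by (rule wd)
    also have "\<dots> = (b * e * r) * s" by (simp only: mult.assoc)
    also have "b * e * r = \<phi> x" by (simp only: x wd)
    finally show "\<phi> (x * s) = \<phi> x * s" .
  qed
  have cg: "countably_generated_right_ideal J" unfolding J_def by (rule principal_cg)
  obtain \<psi> where \<psi>: "right_hom UNIV \<psi>" "\<forall>x\<in>J. \<psi> x = \<phi> x"
    using H cg rh unfolding right_aleph0_self_injective_def by blast
  show ?thesis
  proof (intro exI ballI)
    fix y assume "y \<in> range ((*) e)"
    then obtain r where r: "y = e * r" by auto
    have "\<psi> 1 * (a * e * r) = \<psi> (a * e * r)" by (rule right_hom_UNIV[OF \<psi>(1), symmetric])
    also have "\<dots> = \<phi> (a * e * r)" using \<psi>(2) by (simp add: J_def mult.assoc)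
    also have "\<dots> = b * e * r" by (rule wd)
    finally show "\<psi> 1 * a * y = b * y" using r by (simp add: mult.assoc)
  qed
qed

lemma baer_aug:
  assumes H: "right_aleph0_self_injective TYPE('g::group_add \<Rightarrow>\<^sub>0 'a::field_char_0)"
  shows "\<forall>b :: 'g \<Rightarrow>\<^sub>0 'a. (\<forall>y\<in>Tinv (set as). b * y = 0) \<longrightarrow> aug b = 0"
proof (induction as)
  case Nil
  show ?case
  proof (intro allI impI)
    fix b :: "'g \<Rightarrow>\<^sub>0 'a" assume "\<forall>y\<in>Tinv (set []). b * y = 0"
    then have "b = 0" by (simp add: Tinv_def) (metis mult_1_right)
    then show "aug b = 0" by (simp add: aug_def)
  qed
next
  case (Cons s as)
  show ?case
  proof (intro allI impI)
    fix b :: "'g \<Rightarrow>\<^sub>0 'a" assume hb: "\<forall>y\<in>Tinv (set (s # as)). b * y = 0"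
    obtain e :: "'g \<Rightarrow>\<^sub>0 'a" where e: "Tinv (set as) = range ((*) e)" using Tinv_principal by blast
    define a :: "'g \<Rightarrow>\<^sub>0 'a" where "a = 1 - dl s"
    have "b * y = 0" if "y \<in> range ((*) e)" "a * y = 0" for y
    proof -
      have "dl s * y = y" using that(2) by (simp add: a_def left_diff_distrib)
      then have "y \<in> Tinv (set (s # as))" using that(1) e by (auto simp: Tinv_def)
      then show ?thesis using hb by blast
    qed
    then obtain c where c: "\<forall>y\<in>range ((*) e). c * a * y = b * y"
      using principal_inj[OF H] by blast
    have "\<forall>y\<in>Tinv (set as). (b - c * a) * y = 0"
      using c e by (simp add: left_diff_distrib)
    then have "aug (b - c * a) = 0" using Cons.IH by blast
    then show "aug b = 0" by (simp add: aug_diff a_def aug_aug_zero)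
  qed
qed

lemma caseA:
  assumes H: "right_aleph0_self_injective TYPE('g::group_add \<Rightarrow>\<^sub>0 'a::field_char_0)"
    and S: "finite S" "Tinv S = ({0} :: ('g \<Rightarrow>\<^sub>0 'a) set)"
  shows False
proof -
  obtain as where as: "set as = S" using finite_list[OF S(1)] by blast
  have "\<forall>y\<in>Tinv (set as). (1 :: 'g \<Rightarrow>\<^sub>0 'a) * y = 0" using S(2) as by simp
  then have "aug (1 :: 'g \<Rightarrow>\<^sub>0 'a) = 0" using baer_aug[OF H] by blast
  then show False by (simp add: aug_one)
qed

fun Dsum :: "(nat \<Rightarrow> 'r::ring_1) \<Rightarrow> nat \<Rightarrow> 'r" where
  "Dsum f 0 = 0"
| "Dsum f (Suc n) = Dsum f n + (if even n then f n else 0)"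

lemma chain_nonext:
  fixes e :: "nat \<Rightarrow> 'r::ring_1"
  assumes H: "right_aleph0_self_injective TYPE('r)"
    and emax: "\<And>m n. e m * e n = e (max m n)"
  shows "\<exists>c. \<forall>n. c * (e n - e (Suc n)) = (if even n then e n - e (Suc n) else 0)"
proof -
  define f where "f n = e n - e (Suc n)" for n
  define E where "E N = e 0 - e N" for N
  have ff: "f M * f k = (if M = k then f k else 0)" for M k
    unfolding f_def
    by (cases M k rule: linorder_cases) (auto simp: algebra_simps emax max_def dest: Suc_leI)
  have Df: "Dsum f M * f k = (if k < M \<and> even k then f k else 0)" for M k
    by (induction M) (auto simp: distrib_right ff)
  have ESuc: "E (Suc N) = E N + f N" for N by (simp add: E_def f_def)
  have E0: "E 0 = 0" by (simp add: E_def)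
  have DE: "N \<le> M \<Longrightarrow> Dsum f M * E N = Dsum f N" for N M
  proof (induction N)
    case 0 then show ?case by (simp add: E0)
  next
    case (Suc N) then show ?case by (simp add: ESuc distrib_left Df)
  qed
  have EE: "N \<le> K \<Longrightarrow> E K * E N = E N" for N K
    unfolding E_def by (simp add: algebra_simps emax max_def)
  have Ef: "E (Suc n) * f n = f n" for n
    unfolding E_def f_def by (simp add: algebra_simps emax max_def)
  have absorb: "E K * x = x" if "x = E N * x" "N \<le> K" for x N K
  proof -
    have "E K * x = E K * (E N * x)" using that(1) by simp
    also have "\<dots> = E N * x" by (simp only: mult.assoc[symmetric] EE[OF that(2)])
    finally show ?thesis using that(1) by simp
  qed
  define W where "W = {y. \<exists>N. y = E N * y}"
  define \<phi> where "\<phi> y = Dsum f (LEAST N. y = E N * y) * y" for y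
  have wd: "\<phi> y = Dsum f N * y" if "y = E N * y" for y N
  proof -
    define N0 where "N0 = (LEAST N. y = E N * y)"
    have y0: "y = E N0 * y" unfolding N0_def by (rule LeastI[of _ N]) (rule that)
    have le: "N0 \<le> N" unfolding N0_def by (rule Least_le) (rule that)
    have "Dsum f N * y = Dsum f N * (E N0 * y)" using y0 by simp
    also have "\<dots> = Dsum f N0 * y" by (simp add: mult.assoc[symmetric] DE[OF le])
    finally show ?thesis by (simp add: \<phi>_def N0_def)
  qed
  have W0: "0 \<in> W" by (auto simp: W_def)
  have Wadd: "x + y \<in> W" if xW: "x \<in> W" and yW: "y \<in> W" for x y
  proof -
    obtain N where x: "x = E N * x" using xW unfolding W_def by blast
    obtain M where y: "y = E M * y" using yW unfolding W_def by blast
    have "E (max N M) * x = x" using x by (rule absorb) simp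
    moreover have "E (max N M) * y = y" using y by (rule absorb) simp
    ultimately have "x + y = E (max N M) * (x + y)" by (simp add: distrib_left)
    then show ?thesis unfolding W_def by blast
  qed
  have Wmul: "x * s \<in> W" if xW: "x \<in> W" for x s
  proof -
    obtain N where x: "x = E N * x" using xW unfolding W_def by blast
    then have "x * s = E N * (x * s)" by (simp add: mult.assoc[symmetric])
    then show ?thesis unfolding W_def by blast
  qed
  have Wri: "right_ideal W" unfolding right_ideal_def using W0 Wadd Wmul by blast
  have Wrh: "right_hom W \<phi>"
    unfolding right_hom_def
  proof (intro conjI ballI allI)
    fix x y assume "x \<in> W" "y \<in> W"
    then obtain N M where x: "x = E N * x" and y: "y = E M * y" unfolding W_def by blast
    have x': "E (max N M) * x = x" using x by (rule absorb) simp
    have y': "E (max N M) * y = y" using y by (rule absorb) simp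
    have xy: "x + y = E (max N M) * (x + y)" using x' y' by (simp add: distrib_left)
    have "\<phi> (x + y) = Dsum f (max N M) * (x + y)" by (rule wd[OF xy])
    also have "\<dots> = Dsum f (max N M) * x + Dsum f (max N M) * y" by (simp add: distrib_left)
    also have "\<dots> = \<phi> x + \<phi> y" using wd[of x "max N M"] wd[of y "max N M"] x' y' by simp
    finally show "\<phi> (x + y) = \<phi> x + \<phi> y" .
  next
    fix x s assume "x \<in> W"
    then obtain N where x: "x = E N * x" unfolding W_def by blast
    then have xs: "x * s = E N * (x * s)" by (simp add: mult.assoc[symmetric])
    have "\<phi> (x * s) = Dsum f N * (x * s)" by (rule wd[OF xs])
    also have "\<dots> = \<phi> x * s" using wd[OF x] by (simp add: mult.assoc)
    finally show "\<phi> (x * s) = \<phi> x * s" .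
  qed
  define I where "I = \<Inter>{J. right_ideal J \<and> range f \<subseteq> J}"
  have fW: "range f \<subseteq> W"
  proof
    fix z assume "z \<in> range f"
    then obtain n where z: "z = f n" by auto
    show "z \<in> W" unfolding W_def z by (intro CollectI exI[of _ "Suc n"]) (simp add: Ef)
  qed
  have IW: "I \<subseteq> W" unfolding I_def using Wri fW by blast
  have cg: "countably_generated_right_ideal I"
    unfolding countably_generated_right_ideal_def I_def
    by (intro conjI right_ideal_Inter exI[of _ "range f"]) auto
  have rh: "right_hom I \<phi>" using Wrh IW unfolding right_hom_def by blast
  obtain \<psi> where \<psi>: "right_hom UNIV \<psi>" "\<forall>x\<in>I. \<psi> x = \<phi> x"
    using H cg rh unfolding right_aleph0_self_injective_def by blast
  have fI: "f n \<in> I" for n unfolding I_def by blast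
  show ?thesis
  proof (intro exI allI)
    fix n
    have "\<psi> 1 * f n = \<psi> (f n)" by (rule right_hom_UNIV[OF \<psi>(1), symmetric])
    also have "\<dots> = \<phi> (f n)" using \<psi>(2) fI by blast
    also have "\<dots> = Dsum f (Suc n) * f n" by (rule wd) (simp add: Ef)
    also have "\<dots> = (if even n then f n else 0)" using Df[of "Suc n" n] by simp
    finally show "\<psi> 1 * (e n - e (Suc n)) = (if even n then e n - e (Suc n) else 0)"
      by (simp add: f_def)
  qed
qed

primrec Sq :: "'a::field itself \<Rightarrow> nat \<Rightarrow> 'g::group_add set" where
  "Sq t 0 = {}"
| "Sq t (Suc n) = insert (SOME x. x \<notin> Kst (Sq t n) t) (Sq t n)"

lemma lookup_mult_zero:
  fixes c x :: "'g::group_add \<Rightarrow>\<^sub>0 'a::field"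
  shows "Poly_Mapping.lookup (c * x) 0 = (\<Sum>g\<in>Poly_Mapping.keys c. Poly_Mapping.lookup c g * Poly_Mapping.lookup x (-g))"
proof -
  have "c * x = (\<Sum>g\<in>Poly_Mapping.keys c. Poly_Mapping.single g (Poly_Mapping.lookup c g) * x)"
    by (subst pm_decomp[of c]) (simp add: sum_distrib_right)
  then show ?thesis by (simp add: lookup_sum lookup_single_mult)
qed

lemma caseB:
  assumes H: "right_aleph0_self_injective TYPE('g::group_add \<Rightarrow>\<^sub>0 'a::field_char_0)"
    and inf: "infinite (UNIV :: 'g set)"
    and loc: "\<And>S. finite S \<Longrightarrow> Tinv S \<noteq> ({0} :: ('g \<Rightarrow>\<^sub>0 'a) set)"
  shows False
proof -
  define t where "t = TYPE('a)"
  define Kn where "Kn n = (Kst (Sq t n) t :: 'g set)" for n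
  have finSq: "finite (Sq t n :: 'g set)" for n by (induction n) auto
  have finK: "finite (Kn n)" for n
  proof -
    have "(0 :: 'g \<Rightarrow>\<^sub>0 'a) \<in> Tinv (Sq t n)" by (simp add: Tinv_def)
    then obtain y0 :: "'g \<Rightarrow>\<^sub>0 'a" where "y0 \<in> Tinv (Sq t n)" "y0 \<noteq> 0"
      using loc[OF finSq[of n]] by blast
    then show ?thesis unfolding Kn_def t_def by (rule Kst_finite)
  qed
  have sg: "subgrp (Kn n)" for n unfolding Kn_def t_def by (rule Kst_subgrp)
  have ne: "Kn n \<noteq> {}" for n using sg[of n] by (auto simp: subgrp_def)
  define x where "x n = (SOME x. x \<notin> Kn n)" for n
  have xn: "x n \<notin> Kn n" for n
    unfolding x_def by (rule someI_ex) (use ex_new_if_finite[OF inf finK] in blast)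
  have Ksuc: "Kn n \<subseteq> Kn (Suc n)" for n
    unfolding Kn_def t_def by (rule Kst_mono) auto
  have xsuc: "x n \<in> Kn (Suc n)" for n
    using S_sub_Kst[of "Sq t (Suc n)"] unfolding Kn_def x_def by (auto simp: t_def)
  have Kmono: "m \<le> n \<Longrightarrow> Kn m \<subseteq> Kn n" for m n
    by (rule lift_Suc_mono_le[of Kn]) (use Ksuc in auto)
  have cardlt: "card (Kn n) < card (Kn (Suc n))" for n
    by (rule psubset_card_mono) (use finK Ksuc xn xsuc in blast)+
  define e :: "nat \<Rightarrow> 'g \<Rightarrow>\<^sub>0 'a" where "e n = avg (Kn n)" for n
  have emax: "e m * e n = e (max m n)" for m n
  proof (cases "m \<le> n")
    case True
    have "e m * e n = e n" unfolding e_def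
      by (rule avg_absorb_left[OF finK ne]) (use Kmono[OF True] avg_dl_left[OF sg finK] in blast)
    then show ?thesis using True by (simp add: max_def)
  next
    case False
    then have le: "n \<le> m" by simp
    have "e m * e n = e m" unfolding e_def
      by (rule avg_absorb_right[OF finK ne]) (use Kmono[OF le] avg_dl_right[OF sg finK] in blast)
    then show ?thesis using False by (simp add: max_def)
  qed
  obtain c where c: "\<And>n. c * (e n - e (Suc n)) = (if even n then e n - e (Suc n) else 0)"
    using chain_nonext[OF H emax] by blast
  define U where "U = (\<Union>n. Kn n)"
  define mg where "mg g = (LEAST m. g \<in> Kn m)" for g
  define N where "N = (\<Sum>g\<in>Poly_Mapping.keys c. mg g)"
  have inKn: "g \<in> Kn n" if h1: "g \<in> Poly_Mapping.keys c" and h2: "g \<in> U" and h3: "N \<le> n" for g n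
  proof -
    obtain m where m: "g \<in> Kn m" using h2 by (auto simp: U_def)
    have "g \<in> Kn (mg g)" unfolding mg_def by (rule LeastI[of _ m]) (rule m)
    moreover have "mg g \<le> N" unfolding N_def
      by (rule member_le_sum) (use h1 in auto)
    ultimately show ?thesis using Kmono[of "mg g" n] h3 by auto
  qed
  define v :: "nat \<Rightarrow> 'a" where "v n = inverse (of_nat (card (Kn n))) - inverse (of_nat (card (Kn (Suc n))))" for n
  have vnz: "v n \<noteq> 0" for n
  proof
    assume "v n = 0"
    then have "inverse (of_nat (card (Kn n)) :: 'a) = inverse (of_nat (card (Kn (Suc n))))"
      by (simp add: v_def)
    then have "card (Kn n) = card (Kn (Suc n))" by simp
    then show False using cardlt[of n] by simp
  qed
  define C where "C = (\<Sum>g\<in>Poly_Mapping.keys c. if g \<in> U then Poly_Mapping.lookup c g else 0)"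
  have key: "Poly_Mapping.lookup (c * (e n - e (Suc n))) 0 = C * v n" if "N \<le> n" for n
  proof -
    have "Poly_Mapping.lookup (e n - e (Suc n)) (-g) = (if g \<in> U then v n else 0)"
      if g: "g \<in> Poly_Mapping.keys c" for g
    proof (cases "g \<in> U")
      case True
      then have "g \<in> Kn n" using inKn g \<open>N \<le> n\<close> by blast
      then have gn: "-g \<in> Kn n" using sg[of n] by (auto simp: subgrp_def)
      then have "-g \<in> Kn n" "-g \<in> Kn (Suc n)" using Ksuc[of n] by auto
      then show ?thesis using True
        by (simp add: e_def lookup_minus lookup_avg finK v_def)
    next
      case False
      have "-g \<notin> Kn m" for m
      proof
        assume "-g \<in> Kn m"
        then have "- (-g) \<in> Kn m" using sg[of m] unfolding subgrp_def by blast
        then show False using False by (auto simp: U_def)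
      qed
      then show ?thesis using False by (simp add: e_def lookup_minus lookup_avg finK)
    qed
    then have "Poly_Mapping.lookup (c * (e n - e (Suc n))) 0
        = (\<Sum>g\<in>Poly_Mapping.keys c. Poly_Mapping.lookup c g * (if g \<in> U then v n else 0))"
      by (simp add: lookup_mult_zero)
    also have "\<dots> = C * v n" unfolding C_def sum_distrib_right by (rule sum.cong) auto
    finally show ?thesis .
  qed
  have l0: "Poly_Mapping.lookup (e n - e (Suc n)) 0 = v n" for n
  proof -
    have "0 \<in> Kn n" "0 \<in> Kn (Suc n)" using sg by (auto simp: subgrp_def)
    then show ?thesis by (simp add: e_def lookup_minus lookup_avg finK v_def)
  qed
  have "C * v (2 * N) = v (2 * N)"
    using key[of "2 * N"] c[of "2 * N"] l0[of "2 * N"] by simp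
  then have C1: "C = 1" using vnz[of "2 * N"] by simp
  have "C * v (Suc (2 * N)) = 0"
    using key[of "Suc (2 * N)"] c[of "Suc (2 * N)"] by simp
  then have "C = 0" using vnz by simp
  then show False using C1 by simp
qed

lemma selfinj_aleph0:
  "right_self_injective TYPE('r::ring_1) \<Longrightarrow> right_aleph0_self_injective TYPE('r)"
  unfolding right_self_injective_def right_aleph0_self_injective_def countably_generated_right_ideal_def
  by blast

lemma aleph0_finite:
  assumes H: "right_aleph0_self_injective TYPE('g::group_add \<Rightarrow>\<^sub>0 'a::field_char_0)"
  shows "finite (UNIV :: 'g set)"
proof (rule ccontr)
  assume inf: "infinite (UNIV :: 'g set)"
  show False
  proof (cases "\<exists>S. finite S \<and> Tinv S = ({0} :: ('g \<Rightarrow>\<^sub>0 'a) set)")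
    case True
    then obtain S where "finite S" "Tinv S = ({0} :: ('g \<Rightarrow>\<^sub>0 'a) set)" by blast
    then show False using caseA[OF H] by blast
  next
    case False
    then show False using caseB[OF H inf] by blast
  qed
qed

theorem mainTheorem18:
  shows "(right_aleph0_self_injective TYPE('g::group_add \<Rightarrow>\<^sub>0 'a::field_char_0)
            \<longleftrightarrow> finite (UNIV :: 'g set))
       \<and> (finite (UNIV :: 'g set)
            \<longleftrightarrow> right_self_injective TYPE('g \<Rightarrow>\<^sub>0 'a))"
  using aleph0_finite[where 'g='g and 'a='a] finite_self_injective[where 'g='g and 'a='a]
    selfinj_aleph0[where 'r="'g \<Rightarrow>\<^sub>0 'a"]
  by blast

end
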